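(* For a ReLU MLP with parameter vector $w\in\mathbb{R}^p$, define $B=\{w_0\in\mathbb{R}^p : \text{there exist a hidden neuron }(l,i),\ 1\le l\le L,\ 1\le i\le n_l,\ \text{and a nonempty open set } \mathcal{U}\subseteq\mathbb{R}^{n_0} \text{ with } z_l(x;w_0)_i=0 \text{ for all } x\in\mathcal{U}\}$. Then $B$ has Lebesgue measure zero in $\mathbb{R}^p$.
   Context: A ReLU multilayer perceptron (MLP) with $L$ hidden layers and widths $n_0,n_1,\dots,n_L,n_{L+1}$ has parameters $w=(W_0,b_0,W_1,b_1,\dots,W_L,b_L)\in\mathbb{R}^p$ with $W_l\in\mathbb{R}^{n_{l+1}\times n_l}$, $b_l\in\mathbb{R}^{n_{l+1}}$ (all entries concatenated into one vector of length $p$). For $x\in\mathbb{R}^{n_0}$ set $h_0(x;w)=x$ and for $l=1,\dots,L$ define the pre-activations $z_l(x;w)=W_{l-1}h_{l-1}(x;w)+b_{l-1}\in\mathbb{R}^{n_l}$ and activations $h_l(x;w)=\sigma(z_l(x;w))$, where $\sigma(t)=\max(t,0)$ is applied elementwise; the output is $f(x;w)=W_Lh_L(x;w)+b_L$. *)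

theory Defs
  imports "HOL-Analysis.Analysis"
begin

text \<open>Parameter indices: Inl (l,i,j) is entry (i,j) of W_l, Inr (l,i) is entry i of b_l
  (0-based row/column indices).  Widths are n :: nat \<Rightarrow> nat, with n l the width of layer l.\<close>

type_synonym param_idx = "(nat \<times> nat \<times> nat) + (nat \<times> nat)"

definition mlp_params :: "(nat \<Rightarrow> nat) \<Rightarrow> nat \<Rightarrow> param_idx set" where
  "mlp_params n L =
     {Inl (l, i, j) | l i j. l \<le> L \<and> i < n (Suc l) \<and> j < n l} \<union>
     {Inr (l, i) | l i. l \<le> L \<and> i < n (Suc l)}"

fun mlp_h :: "(nat \<Rightarrow> nat) \<Rightarrow> (param_idx \<Rightarrow> real) \<Rightarrow> (nat \<Rightarrow> real) \<Rightarrow> nat \<Rightarrow> nat \<Rightarrow> real" where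
  "mlp_h n w x 0 = x"
| "mlp_h n w x (Suc l) =
     (\<lambda>i. max ((\<Sum>j<n l. w (Inl (l, i, j)) * mlp_h n w x l j) + w (Inr (l, i))) 0)"

text \<open>Pre-activations z_l(x;w) for l \<ge> 1: z_{l+1} = W_l h_l + b_l.\<close>
definition mlp_z :: "(nat \<Rightarrow> nat) \<Rightarrow> (param_idx \<Rightarrow> real) \<Rightarrow> (nat \<Rightarrow> real) \<Rightarrow> nat \<Rightarrow> nat \<Rightarrow> real" where
  "mlp_z n w x l i = (\<Sum>j<n (l - 1). w (Inl (l - 1, i, j)) * mlp_h n w x (l - 1) j) + w (Inr (l - 1, i))"

definition mlp_bad_set :: "(nat \<Rightarrow> nat) \<Rightarrow> nat \<Rightarrow> (param_idx \<Rightarrow> real) set" where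
  "mlp_bad_set n L =
     {w \<in> PiE (mlp_params n L) (\<lambda>_. UNIV).
        \<exists>l i U. 1 \<le> l \<and> l \<le> L \<and> i < n l \<and> U \<noteq> {} \<and>
          openin (Euclidean_space (n 0)) U \<and> (\<forall>x\<in>U. mlp_z n w x l i = 0)}"

end

theory Submission
  imports Defs
begin
definition trunc :: "nat \<Rightarrow> (nat \<Rightarrow> real) \<Rightarrow> nat \<Rightarrow> real" where
  "trunc m y = (\<lambda>i. if i < m then y i else 0)"
lemma trunc_cont: "continuous_on UNIV (trunc m)"
  unfolding trunc_def by (intro continuous_on_coordinatewise_then_product) (case_tac "i < m", auto)
lemma A: "openin (Euclidean_space m) U \<Longrightarrow> \<exists>T. open T \<and> U = T \<inter> {x. \<forall>i\<ge>m. x i = 0}"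
proof -
  assume "openin (Euclidean_space m) U"
  then have "openin (subtopology (powertop_real UNIV) {x. \<forall>i\<ge>m. x i = 0}) U"
    unfolding Euclidean_space_def .
  then have "\<exists>T. openin (powertop_real UNIV) T \<and> U = T \<inter> {x. \<forall>i\<ge>m. x i = 0}"
    by (rule openin_subtopology[THEN iffD1])
  then obtain T where T: "openin (powertop_real UNIV) T \<and> U = T \<inter> {x. \<forall>i\<ge>m. x i = 0}" ..
  note T1 = conjunct1[OF T] and T2 = conjunct2[OF T]
  have "open T" using T1[unfolded euclidean_product_topology] by (rule open_openin[THEN iffD2])
  with T2 show ?thesis by auto
qed
lemma B: "x \<in> U \<Longrightarrow> U = T \<inter> {x. \<forall>i\<ge>m. x i = (0::real)} \<Longrightarrow> trunc m x = x"
  unfolding trunc_def by fastforce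
lemma C: "open T \<Longrightarrow> open (trunc m -` T)"
  using continuous_on_open_vimage[OF open_UNIV, of "trunc m"] trunc_cont by simp
lemma X: "\<exists>D :: (nat \<Rightarrow> real) set. countable D \<and> (\<forall>X. open X \<longrightarrow> X \<noteq> {} \<longrightarrow> (\<exists>d \<in> D. d \<in> X))"
  by (rule countable_dense_exists)

lemma dense_pt:
  "\<exists>D :: (nat \<Rightarrow> real) set. countable D \<and>
    (\<forall>m U. openin (Euclidean_space m) U \<longrightarrow> U \<noteq> {} \<longrightarrow> (\<exists>d\<in>D. trunc m d \<in> U))"
proof -
  obtain D :: "(nat \<Rightarrow> real) set" where D1: "countable D" and D3: "\<forall>X. open X \<longrightarrow> X \<noteq> {} \<longrightarrow> (\<exists>d \<in> D. d \<in> X)"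
    using X by blast
  note D = D1 D3[rule_format]
  have "\<exists>d\<in>D. trunc m d \<in> U" if U: "openin (Euclidean_space m) U" "U \<noteq> {}" for m U
  proof -
    obtain T where T: "open T" "U = T \<inter> {x. \<forall>i\<ge>m. x i = 0}"
      using A[OF U(1)] by blast
    obtain x where x: "x \<in> U" using U(2) by blast
    have tx: "trunc m x = x" using B[OF x T(2)] .
    have op: "open (trunc m -` T)" using C[OF T(1)] .
    have "x \<in> trunc m -` T" using tx x T(2) by auto
    then have "trunc m -` T \<noteq> {}" by blast
    then obtain d where d: "d \<in> D" "d \<in> trunc m -` T" using D(2)[OF op] by blast
    have "trunc m d \<in> {x. \<forall>i\<ge>m. x i = 0}" by (auto simp: trunc_def)
    then have "trunc m d \<in> U" using d(2) T(2) by blast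
    then show ?thesis using d(1) by blast
  qed
  then show ?thesis using D(1) by blast
qed
lemma c1: "k \<in> I \<Longrightarrow> (\<lambda>w. w k) \<in> borel_measurable (PiM I (\<lambda>_. lborel :: real measure))"
  using measurable_component_singleton[of k I "\<lambda>_. lborel :: real measure"] by simp
lemma c2: "k \<notin> I \<Longrightarrow> (\<lambda>w. w k) \<in> borel_measurable (PiM I (\<lambda>_. lborel :: real measure))"
proof -
  assume k: "k \<notin> I"
  have e: "w k = undefined" if "w \<in> space (PiM I (\<lambda>_. lborel :: real measure))" for w
  proof -
    have "w \<in> PiE I (\<lambda>_. UNIV)" using that unfolding space_PiM by simp
    then show ?thesis using k by (rule PiE_arb)
  qed
  have "(\<lambda>w. w k) \<in> borel_measurable (PiM I (\<lambda>_. lborel :: real measure)) \<longleftrightarrow> (\<lambda>_. undefined :: real) \<in> borel_measurable (PiM I (\<lambda>_. lborel :: real measure))"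
    by (rule measurable_cong) (rule e)
  then show ?thesis by simp
qed

lemma comp_meas: "(\<lambda>w. w k) \<in> borel_measurable (PiM I (\<lambda>_. lborel :: real measure))"
  by (cases "k \<in> I") (erule c1, erule c2)

lemma h_meas: "(\<lambda>w. mlp_h n w x m j) \<in> borel_measurable (PiM I (\<lambda>_. lborel :: real measure))"
proof (induction m arbitrary: j)
  case 0 then show ?case by simp
next
  case (Suc m)
  note [measurable] = comp_meas Suc.IH
  show ?case by simp measurable
qed

lemma z_meas: "(\<lambda>w. mlp_z n w x l i) \<in> borel_measurable (PiM I (\<lambda>_. lborel :: real measure))"
proof -
  note [measurable] = comp_meas h_meas
  show ?thesis unfolding mlp_z_def by measurable
qed
lemma h_indep: "m \<le> m' \<Longrightarrow> mlp_h n (w(Inr (m', i') := y)) x m = mlp_h n w x m"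
  by (induction m) auto

lemma z_null:
  assumes I: "finite I" and k: "Inr (l - 1, i) \<in> I"
  shows "{w \<in> space (PiM I (\<lambda>_. lborel)). mlp_z n w x l i = 0} \<in> null_sets (PiM I (\<lambda>_. lborel))"
proof -
  define k :: param_idx where "k = Inr (l - 1, i)"
  define J where "J = I - {k}"
  define M where "M = PiM I (\<lambda>_. lborel :: real measure)"
  define N where "N = {w \<in> space M. mlp_z n w x l i = 0}"
  define g where "g w = (\<Sum>j<n (l - 1). w (Inl (l - 1, i, j)) * mlp_h n w x (l - 1) j)" for w :: "param_idx \<Rightarrow> real"
  interpret product_sigma_finite "\<lambda>_. lborel :: real measure" by standard
  have IJ: "I = insert k J" "k \<notin> J" "finite J" using k I unfolding J_def k_def by auto
  have zg: "mlp_z n (w(k := y)) x l i = g w + y" for w y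
    unfolding mlp_z_def g_def k_def by (simp add: h_indep)
  have Nm: "N \<in> sets M" unfolding N_def M_def
    using z_meas by measurable
  have "emeasure M N = (\<integral>\<^sup>+ w. indicator N w \<partial>M)" using Nm by simp
  also have "\<dots> = (\<integral>\<^sup>+ w. (\<integral>\<^sup>+ y. indicator N (w(k := y)) \<partial>lborel) \<partial>(PiM J (\<lambda>_. lborel)))"
    unfolding M_def IJ(1) by (rule product_nn_integral_insert) (use IJ Nm M_def in auto)
  also have "\<dots> = (\<integral>\<^sup>+ w. 0 \<partial>(PiM J (\<lambda>_. lborel :: real measure)))"
  proof (rule nn_integral_cong)
    fix w assume w: "w \<in> space (PiM J (\<lambda>_. lborel :: real measure))"
    have sp: "w(k := y) \<in> space M" for y
      using w unfolding M_def IJ(1) space_PiM by (intro PiE_fun_upd) auto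
    have "indicator N (w(k := y)) = (indicator {- g w} y :: ennreal)" for y
      using sp[of y] unfolding N_def by (auto simp: zg indicator_def)
    then have "(\<integral>\<^sup>+ y. indicator N (w(k := y)) \<partial>lborel) = (\<integral>\<^sup>+ y. indicator {- g w} y \<partial>lborel)"
      by simp
    also have "\<dots> = 0" by simp
    finally show "(\<integral>\<^sup>+ y. indicator N (w(k := y)) \<partial>lborel) = 0" .
  qed
  also have "\<dots> = 0" by simp
  finally show ?thesis using Nm unfolding N_def M_def by (auto intro: null_setsI)
qed


lemma params_finite: "finite (mlp_params n L)"
proof -
  have "mlp_params n L \<subseteq> Inl ` (SIGMA l:{..L}. {..<n (Suc l)} \<times> {..<n l}) \<union> Inr ` (SIGMA l:{..L}. {..<n (Suc l)})"
    unfolding mlp_params_def by auto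
  moreover have "finite (Inl ` (SIGMA l:{..L}. {..<n (Suc l)} \<times> {..<n l}) \<union> Inr ` (SIGMA l:{..L}. {..<n (Suc l)}) :: param_idx set)"
    by auto
  ultimately show ?thesis by (rule finite_subset)
qed

theorem mainTheorem2:
  fixes n :: "nat \<Rightarrow> nat" and L :: nat
  assumes "\<forall>l\<le>Suc L. n l \<ge> 1"
  shows "mlp_bad_set n L \<in> null_sets (completion (PiM (mlp_params n L) (\<lambda>_. lborel)))"
proof -
  define I where "I = mlp_params n L"
  define M where "M = PiM I (\<lambda>_. lborel :: real measure)"
  obtain D :: "(nat \<Rightarrow> real) set" where D1: "countable D" and
    D2: "\<forall>m U. openin (Euclidean_space m) U \<longrightarrow> U \<noteq> {} \<longrightarrow> (\<exists>d\<in>D. trunc m d \<in> U)"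
    using dense_pt by auto
  define N where "N l i d = {w \<in> space M. mlp_z n w (trunc (n 0) d) l i = 0}" for l i d
  have fin: "finite I" unfolding I_def by (rule params_finite)
  have Nnull: "N l i d \<in> null_sets M" if "1 \<le> l" "l \<le> L" "i < n l" for l i d
  proof -
    have "Inr (l - 1, i) \<in> I" using that unfolding I_def mlp_params_def by auto
    then show ?thesis unfolding N_def M_def by (rule z_null[OF fin])
  qed
  have big: "(\<Union>l\<in>{1..L}. \<Union>i\<in>{..<n l}. \<Union>d\<in>D. N l i d) \<in> null_sets M"
    by (intro null_sets_UN') (auto simp: D1 Nnull)
  have sub: "mlp_bad_set n L \<subseteq> (\<Union>l\<in>{1..L}. \<Union>i\<in>{..<n l}. \<Union>d\<in>D. N l i d)"
  proof
    fix w assume "w \<in> mlp_bad_set n L"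
    then have w: "w \<in> PiE I (\<lambda>_. UNIV)" and "\<exists>l i U. 1 \<le> l \<and> l \<le> L \<and> i < n l \<and> U \<noteq> {} \<and>
          openin (Euclidean_space (n 0)) U \<and> (\<forall>x\<in>U. mlp_z n w x l i = 0)"
      unfolding mlp_bad_set_def I_def by auto
    then obtain l i U where l: "1 \<le> l" "l \<le> L" "i < n l" and U: "U \<noteq> {}"
      "openin (Euclidean_space (n 0)) U" "\<forall>x\<in>U. mlp_z n w x l i = 0" by auto
    obtain d where d: "d \<in> D" "trunc (n 0) d \<in> U" using D2 U(1,2) by auto
    have "w \<in> N l i d" unfolding N_def M_def space_PiM using w U(3) d(2) by auto
    then show "w \<in> (\<Union>l\<in>{1..L}. \<Union>i\<in>{..<n l}. \<Union>d\<in>D. N l i d)" using l d(1) by (intro UN_I) auto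
  qed
  show ?thesis
    using null_sets_completion_subset[OF sub null_sets_completionI[OF big]] unfolding M_def I_def .
qed
end
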